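(* Let $n\ge2$ and let $v_1,\dots,v_k$ and $u_1,\dots,u_k$ be two collections of $k\le n-1$ normalized vectors in $\mathbb C^n$. Define $\mathcal V:=\{X\in M_n(\mathbb C):\ v_1^\ast Xu_1=\dots=v_k^\ast Xu_k=0\}$. If a nonzero $A\in\mathcal V$ is left-symmetric relative to $\mathcal V$, then $\mathrm{rk}\,A\in\{1,n\}$.
   Context: $M_n(\mathbb C)$ carries the operator (spectral) norm. $A\perp B$ (Birkhoff–James orthogonality) means $\|A+\lambda B\|\ge\|A\|$ for all $\lambda\in\mathbb C$. For a subset $\mathcal S$, an element $A\in\mathcal S$ is left-symmetric relative to $\mathcal S$ if for every $B\in\mathcal S$, $A\perp B$ implies $B\perp A$. *)

theory Defs
  imports "HOL-Analysis.Analysis"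
begin

definition opnorm :: "complex^'n^'n \<Rightarrow> real" where
  "opnorm A = onorm (\<lambda>x. A *v x)"

definition bj_orth :: "complex^'n^'n \<Rightarrow> complex^'n^'n \<Rightarrow> bool" where
  "bj_orth A B \<longleftrightarrow> (\<forall>c::complex. opnorm (A + (\<chi> i j. c * B $ i $ j)) \<ge> opnorm A)"

definition left_symmetric_in :: "(complex^'n^'n) set \<Rightarrow> complex^'n^'n \<Rightarrow> bool" where
  "left_symmetric_in S A \<longleftrightarrow> A \<in> S \<and> (\<forall>B\<in>S. bj_orth A B \<longrightarrow> bj_orth B A)"

definition sesq :: "complex^'n \<Rightarrow> complex^'n^'n \<Rightarrow> complex^'n \<Rightarrow> complex" where
  "sesq v X u = (\<Sum>i\<in>UNIV. cnj (v $ i) * ((X *v u) $ i))"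

end

theory Submission
  imports Defs
begin

definition cinner :: "complex^'n \<Rightarrow> complex^'n \<Rightarrow> complex" where
  "cinner p q = (\<Sum>i\<in>UNIV. cnj (p$i) * q$i)"

lemma cinner_add_left: "cinner (p + p') q = cinner p q + cinner p' q"
  by (simp add: cinner_def sum.distrib algebra_simps)
lemma cinner_add_right: "cinner p (q + q') = cinner p q + cinner p q'"
  by (simp add: cinner_def sum.distrib algebra_simps)
lemma cinner_diff_left: "cinner (p - p') q = cinner p q - cinner p' q"
  by (simp add: cinner_def sum_subtractf algebra_simps)
lemma cinner_diff_right: "cinner p (q - q') = cinner p q - cinner p q'"
  by (simp add: cinner_def sum_subtractf algebra_simps)
lemma cinner_smult_left: "cinner (c *s p) q = cnj c * cinner p q"
  by (simp add: cinner_def sum_distrib_left algebra_simps)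
lemma cinner_smult_right: "cinner p (c *s q) = c * cinner p q"
  by (simp add: cinner_def sum_distrib_left algebra_simps)
lemma cinner_zero_left[simp]: "cinner 0 q = 0" and cinner_zero_right[simp]: "cinner p 0 = 0"
  by (simp_all add: cinner_def)
lemma cinner_cnj: "cnj (cinner p q) = cinner q p"
  by (simp add: cinner_def mult.commute)
lemma cinner_sum_right: "cinner p (\<Sum>j\<in>J. f j) = (\<Sum>j\<in>J. cinner p (f j))"
  by (simp add: cinner_def sum_component sum_distrib_left sum.swap[of _ J])
lemma cinner_sum_left: "cinner (\<Sum>j\<in>J. f j) p = (\<Sum>j\<in>J. cinner (f j) p)"
  by (simp add: cinner_def sum_component sum_distrib_right sum.swap[of _ J])

lemma Re_cinner: "Re (cinner p q) = inner p q"
  by (simp add: cinner_def inner_vec_def inner_complex_def Re_sum)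

lemma Im_cinner_self: "Im (cinner p p) = 0"
  by (simp add: cinner_def Im_sum)

lemma cinner_self: "cinner p p = complex_of_real ((norm p)^2)"
  by (simp add: complex_eq_iff Im_cinner_self Re_cinner power2_norm_eq_inner)

lemma cinner_self_eq0: "cinner p p = 0 \<longleftrightarrow> p = 0"
  by (simp add: cinner_self)

lemma norm_add_sq: "(norm (p + q))^2 = (norm p)^2 + 2 * Re (cinner p q) + (norm q)^2"
  by (simp add: Re_cinner power2_norm_eq_inner inner_add_left inner_add_right inner_commute)

lemma norm_smult_sq: "(norm (c *s p))^2 = (cmod c)^2 * (norm p)^2"
proof -
  have "(norm (c *s p))^2 = Re (cinner (c *s p) (c *s p))"
    by (simp add: cinner_self)
  also have "cinner (c *s p) (c *s p) = (cnj c * c) * cinner p p"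
    by (simp add: cinner_smult_left cinner_smult_right mult.assoc)
  also have "cnj c * c = complex_of_real ((cmod c)^2)"
    by (metis complex_norm_square mult.commute)
  finally show ?thesis by (simp add: cinner_self del: of_real_power)
qed

lemma norm_smult: "norm (c *s p) = cmod c * norm p"
  using norm_smult_sq[of c p]
  by (metis norm_ge_zero power2_eq_imp_eq power_mult_distrib zero_le_mult_iff)

lemma cs_ineq: "cmod (cinner p q) \<le> norm p * norm q"
proof (cases "cinner p q = 0")
  case True then show ?thesis by simp
next
  case False
  define c where "c = cinner p q"
  define w where "w = cnj c / cmod c"
  have cw: "cmod w = 1" using False by (simp add: w_def c_def norm_divide)
  have "w * c = cnj c * c / cmod c" by (simp add: w_def)
  also have "cnj c * c = complex_of_real ((cmod c)^2)"
    by (simp add: complex_norm_square mult.commute del: of_real_power)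
  finally have "w * c = complex_of_real (cmod c)" using False
    by (simp add: c_def power2_eq_square)
  then have "cmod c = Re (w * c)" by simp
  also have "\<dots> = inner p (w *s q)" by (simp add: Re_cinner[symmetric] cinner_smult_right c_def)
  also have "\<dots> \<le> norm p * norm (w *s q)" by (rule norm_cauchy_schwarz)
  also have "\<dots> = norm p * norm q" by (simp add: norm_smult cw)
  finally show ?thesis by (simp add: c_def)
qed

definition adj :: "complex^'n^'n \<Rightarrow> complex^'n^'n" where
  "adj A = (\<chi> i j. cnj (A$j$i))"

definition outer :: "complex^'n \<Rightarrow> complex^'n \<Rightarrow> complex^'n^'n" where
  "outer w y = (\<chi> i j. w$i * cnj (y$j))"

definition smat :: "complex \<Rightarrow> complex^'n^'n \<Rightarrow> complex^'n^'n" where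
  "smat c B = (\<chi> i j. c * B$i$j)"

lemma cinner_adj: "cinner p (A *v q) = cinner (adj A *v p) q"
proof -
  have "cinner p (A *v q) = (\<Sum>i\<in>UNIV. \<Sum>j\<in>UNIV. cnj (p$i) * A$i$j * q$j)"
    by (simp add: cinner_def matrix_vector_mult_def sum_distrib_left mult.assoc)
  also have "\<dots> = (\<Sum>j\<in>UNIV. \<Sum>i\<in>UNIV. cnj (p$i) * A$i$j * q$j)"
    by (rule sum.swap)
  also have "\<dots> = cinner (adj A *v p) q"
    by (simp add: cinner_def adj_def matrix_vector_mult_def sum_distrib_left ac_simps)
  finally show ?thesis .
qed

lemma outer_mv: "outer w y *v h = cinner y h *s w"
  by (simp add: outer_def cinner_def matrix_vector_mult_def vec_eq_iff sum_distrib_left algebra_simps)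

lemma smat_mv: "smat c B *v h = c *s (B *v h)"
  by (simp add: smat_def matrix_vector_mult_def vec_eq_iff sum_distrib_left algebra_simps)

lemma mv_smult: "A *v (c *s h) = c *s (A *v h)" for A :: "complex^'n^'m"
  unfolding matrix_vector_mult_def vec_eq_iff
  by (auto simp: sum_distrib_left mult.left_commute intro!: sum.cong)

lemma mv_add: "(A + B) *v h = A *v h + B *v h" for A :: "complex^'n^'m"
  by (simp add: matrix_vector_mult_def vec_eq_iff sum.distrib algebra_simps)

lemma mv_sum: "A *v (\<Sum>j\<in>J. f j) = (\<Sum>j\<in>J. A *v f j)" for A :: "complex^'n^'m"
  by (simp add: matrix_vector_mult_def vec_eq_iff sum_component sum_distrib_left sum.swap[of _ J])

lemma ofreal_smult: "complex_of_real t *s p = t *\<^sub>R p" for p :: "complex^'n"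
  by (auto simp: vec_eq_iff complex_eq_iff)

lemma mv_scaleR: "A *v (t *\<^sub>R h) = t *\<^sub>R (A *v h)" for A :: "complex^'n^'m"
proof -
  have "A *v (t *\<^sub>R h) = A *v (complex_of_real t *s h)" by (simp only: ofreal_smult)
  also have "\<dots> = complex_of_real t *s (A *v h)" by (rule mv_smult)
  finally show ?thesis by (simp only: ofreal_smult)
qed

lemma cinner_eq_vec: "(\<And>p. cinner p a = cinner p b) \<Longrightarrow> a = b"
  by (metis cinner_diff_right cinner_self_eq0 eq_iff_diff_eq_0)


lemma opnorm_bound: "norm (A *v h) \<le> opnorm A * norm h"
  unfolding opnorm_def by (rule onorm[OF matrix_vector_mul_bounded_linear])

lemma opnorm_nonneg: "opnorm A \<ge> 0"
  unfolding opnorm_def by (rule onorm_pos_le[OF matrix_vector_mul_bounded_linear])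

lemma opnorm_le: "(\<And>h. norm (A *v h) \<le> b * norm h) \<Longrightarrow> opnorm A \<le> b"
  unfolding opnorm_def by (rule onorm_le)

lemma norming_exists: "\<exists>h::complex^'n. norm h = 1 \<and> norm (A *v h) = opnorm A"
proof -
  let ?S = "sphere (0::complex^'n) 1"
  obtain i :: 'n where True by simp
  have "axis i 1 \<in> ?S" by simp
  then have ne: "?S \<noteq> {}" by blast
  have cont: "continuous_on ?S (\<lambda>h. norm (A *v h))"
    by (intro continuous_intros)
  obtain h0 where h0: "h0 \<in> ?S" and mx: "\<And>h. h \<in> ?S \<Longrightarrow> norm (A *v h) \<le> norm (A *v h0)"
    using continuous_attains_sup[OF compact_sphere ne cont] by blast
  have "opnorm A \<le> norm (A *v h0)"
  proof (rule opnorm_le)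
    fix h :: "complex^'n"
    show "norm (A *v h) \<le> norm (A *v h0) * norm h"
    proof (cases "h = 0")
      case True then show ?thesis by simp
    next
      case False
      have "(inverse (norm h)) *\<^sub>R h \<in> ?S" using False by simp
      then have "norm (A *v ((inverse (norm h)) *\<^sub>R h)) \<le> norm (A *v h0)" by (rule mx)
      moreover have "A *v ((inverse (norm h)) *\<^sub>R h) = (inverse (norm h)) *\<^sub>R (A *v h)"
        by (rule mv_scaleR)
      ultimately have "inverse (norm h) * norm (A *v h) \<le> norm (A *v h0)" by simp
      then show ?thesis using False by (simp add: divide_simps mult.commute)
    qed
  qed
  moreover have "norm (A *v h0) \<le> opnorm A" using opnorm_bound[of A h0] h0 by simp
  ultimately have "norm (A *v h0) = opnorm A" by linarith
  moreover have "norm h0 = 1" using h0 by simp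
  ultimately show ?thesis by blast
qed

lemma opnorm_pos: "A \<noteq> 0 \<Longrightarrow> opnorm A > 0"
proof -
  assume A: "A \<noteq> 0"
  have "opnorm A \<noteq> 0"
  proof
    assume "opnorm A = 0"
    then have "\<And>h. norm (A *v h) \<le> 0" using opnorm_bound[of A] by simp
    then have "\<And>h. A *v h = 0 *v h" by simp
    then have "A = 0" using matrix_eq[of A 0] by blast
    with A show False by simp
  qed
  then show ?thesis using opnorm_nonneg[of A] by simp
qed

lemma bj_orth_smat: "bj_orth A B \<longleftrightarrow> (\<forall>c. opnorm (A + smat c B) \<ge> opnorm A)"
  by (simp add: bj_orth_def smat_def)

lemma bj_from_norming:
  fixes A B :: "complex^'n^'n"
  assumes x1: "norm x = 1" and xn: "norm (A *v x) = opnorm A"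
    and orth: "cinner (A *v x) (B *v x) = 0"
  shows "bj_orth A B"
  unfolding bj_orth_smat
proof
  fix c
  have e: "(A + smat c B) *v x = A *v x + c *s (B *v x)" by (simp add: mv_add smat_mv)
  have "(norm ((A + smat c B) *v x))^2 = (norm (A *v x))^2 + 2 * Re (cinner (A *v x) (c *s (B *v x)))
        + (norm (c *s (B *v x)))^2" by (simp add: e norm_add_sq)
  also have "cinner (A *v x) (c *s (B *v x)) = 0" by (simp add: cinner_smult_right orth)
  finally have "(norm ((A + smat c B) *v x))^2 \<ge> (norm (A *v x))^2" by simp
  then have "norm ((A + smat c B) *v x) \<ge> norm (A *v x)"
    using abs_le_square_iff by fastforce
  moreover have "norm ((A + smat c B) *v x) \<le> opnorm (A + smat c B)"
    using opnorm_bound[of "A + smat c B" x] x1 by simp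
  ultimately show "opnorm (A + smat c B) \<ge> opnorm A" using xn by simp
qed

lemma norm_diff_scaleR_sq:
  fixes p q :: "'a::real_inner"
  shows "(norm (p - t *\<^sub>R q))^2 = (norm p)^2 - 2 * t * inner p q + t^2 * (norm q)^2"
  apply (simp only: power2_norm_eq_inner inner_diff_left inner_diff_right inner_scaleR_left
      inner_scaleR_right inner_commute[of q p])
  apply (simp add: power2_eq_square algebra_simps)
  done

lemma not_bj_crit:
  fixes A B :: "complex^'n^'n"
  assumes Npos: "opnorm B > 0"
    and pos: "\<And>h. norm h = 1 \<Longrightarrow> norm (B *v h) = opnorm B \<Longrightarrow> inner (B *v h) (A *v h) > 0"
  shows "\<not> bj_orth B A"
proof
  assume bj: "bj_orth B A"
  define N where "N = opnorm B"
  define a where "a = opnorm A"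
  have a0: "a \<ge> 0" using opnorm_nonneg a_def by simp
  let ?S = "sphere (0::complex^'n) 1"
  define G where "G h = max (N^2 - (norm (B *v h))^2) (inner (B *v h) (A *v h))" for h
  obtain i :: 'n where True by simp
  have "axis i 1 \<in> ?S" by simp
  then have ne: "?S \<noteq> {}" by blast
  have cont: "continuous_on ?S G"
    unfolding G_def by (intro continuous_intros)
  obtain h0 where h0: "h0 \<in> ?S" and mn: "\<And>h. h \<in> ?S \<Longrightarrow> G h0 \<le> G h"
    using continuous_attains_inf[OF compact_sphere ne cont] by blast
  define \<delta> where "\<delta> = G h0"
  have dpos: "\<delta> > 0"
  proof (cases "N^2 - (norm (B *v h0))^2 > 0")
    case True then show ?thesis by (simp add: \<delta>_def G_def)
  next
    case False
    have h01: "norm h0 = 1" using h0 by simp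
    have "norm (B *v h0) \<le> N" using opnorm_bound[of B h0] h01 N_def by simp
    moreover have "N \<ge> 0" using Npos N_def by simp
    moreover have "N^2 \<le> (norm (B *v h0))^2" using False by simp
    then have "N \<le> norm (B *v h0)" by (rule power2_le_imp_le) simp
    ultimately have "norm (B *v h0) = N" by simp
    then have "inner (B *v h0) (A *v h0) > 0" using pos[OF h01] N_def by simp
    then show ?thesis by (simp add: \<delta>_def G_def)
  qed
  define t where "t = \<delta> / (2 * N * a + a^2 + \<delta> + 1)"
  have Nn: "N > 0" using Npos N_def by simp
  have Na0: "N * a \<ge> 0" using Nn a0 by simp
  have a20: "a^2 \<ge> 0" by simp
  have den: "2 * N * a + a^2 + \<delta> + 1 > 0" using Na0 a20 dpos by linarith
  have t0: "t > 0" using dpos den by (simp add: t_def)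
  have "0 \<le> 2 * N * a + a^2 + 1" using Na0 a20 by linarith
  then have t1: "t \<le> 1" using den dpos by (simp add: t_def)
  have tb: "t * (2 * N * a + a^2) < \<delta>"
  proof -
    have "t * (2 * N * a + a^2 + \<delta> + 1) = \<delta>" using den by (simp add: t_def)
    moreover have "t * (2 * N * a + a^2 + \<delta> + 1) = t * (2 * N * a + a^2) + t * \<delta> + t"
      by (simp add: algebra_simps)
    moreover have "t * \<delta> > 0" using t0 dpos by simp
    ultimately show ?thesis using t0 by linarith
  qed
  have tb2: "t * a^2 < \<delta>"
  proof -
    have "t * a^2 \<le> t * (2 * N * a + a^2)" using t0 Nn a0 by (simp add: mult_left_mono)
    then show ?thesis using tb by simp
  qed
  have key: "(norm ((B + smat (- complex_of_real t) A) *v h))^2 < N^2" if h1: "norm h = 1" for h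
  proof -
    have e: "(B + smat (- complex_of_real t) A) *v h = B *v h - t *\<^sub>R (A *v h)"
      by (simp add: mv_add smat_mv vector_smult_lneg ofreal_smult)
    have nb: "norm (B *v h) \<le> N" using opnorm_bound[of B h] h1 N_def by simp
    have na: "norm (A *v h) \<le> a" using opnorm_bound[of A h] h1 a_def by simp
    have sq: "(norm ((B + smat (- complex_of_real t) A) *v h))^2
        = (norm (B *v h))^2 - 2 * t * inner (B *v h) (A *v h) + t^2 * (norm (A *v h))^2"
      by (simp add: e norm_diff_scaleR_sq)
    have ta: "t^2 * (norm (A *v h))^2 \<le> t * a^2"
    proof -
      have "(norm (A *v h))^2 \<le> a^2" by (rule power_mono[OF na norm_ge_zero])
      then have "t^2 * (norm (A *v h))^2 \<le> t^2 * a^2" by (rule mult_left_mono) simp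
      also have "t^2 \<le> t"
      proof -
        have "t * t \<le> t * 1" using t0 t1 by (intro mult_left_mono) simp_all
        then show ?thesis by (simp add: power2_eq_square)
      qed
      then have "t^2 * a^2 \<le> t * a^2" by (rule mult_right_mono) simp
      finally show ?thesis .
    qed
    have hS: "h \<in> ?S" using h1 by simp
    have "G h \<ge> \<delta>" using mn[OF hS] \<delta>_def by simp
    have nb2: "(norm (B *v h))^2 \<le> N^2" by (rule power_mono[OF nb norm_ge_zero])
    have dis: "N^2 - (norm (B *v h))^2 \<ge> \<delta> \<or> inner (B *v h) (A *v h) \<ge> \<delta>"
      using \<open>G h \<ge> \<delta>\<close> unfolding G_def by linarith
    then show ?thesis
    proof
      assume c1: "N^2 - (norm (B *v h))^2 \<ge> \<delta>"
      have "\<bar>inner (B *v h) (A *v h)\<bar> \<le> norm (B *v h) * norm (A *v h)"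
        by (rule Cauchy_Schwarz_ineq2)
      then have "- inner (B *v h) (A *v h) \<le> norm (B *v h) * norm (A *v h)"
        by (simp only: abs_le_iff)
      also have "\<dots> \<le> N * a" by (rule mult_mono[OF nb na]) (use Nn in simp_all)
      finally have f: "- inner (B *v h) (A *v h) \<le> N * a" .
      have "t * (- inner (B *v h) (A *v h)) \<le> t * (N * a)"
        by (rule mult_left_mono[OF f]) (use t0 in simp)
      moreover have "t * (- inner (B *v h) (A *v h)) = - (t * inner (B *v h) (A *v h))" by simp
      moreover have "2 * t * inner (B *v h) (A *v h) = 2 * (t * inner (B *v h) (A *v h))" by simp
      ultimately have f1: "- (2 * t * inner (B *v h) (A *v h)) \<le> 2 * (t * (N * a))" by linarith
      have f2: "t * (2 * N * a + a^2) = 2 * (t * (N * a)) + t * a^2" by (simp add: algebra_simps)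
      show ?thesis using sq ta c1 tb f1 f2 by linarith
    next
      assume c2: "inner (B *v h) (A *v h) \<ge> \<delta>"
      have f1: "2 * t * \<delta> \<le> 2 * t * inner (B *v h) (A *v h)"
        by (rule mult_left_mono[OF c2]) (use t0 in simp)
      have f2: "t^2 * (norm (A *v h))^2 \<le> t^2 * a^2"
        by (rule mult_left_mono[OF power_mono[OF na norm_ge_zero]]) simp
      have "t * (t * a^2) < t * \<delta>" by (rule mult_strict_left_mono[OF tb2 t0])
      then have f3: "t^2 * a^2 < t * \<delta>" by (simp add: power2_eq_square mult.assoc)
      have f4: "t * \<delta> > 0" using t0 dpos by simp
      show ?thesis using sq nb2 f1 f2 f3 f4 by linarith
    qed
  qed
  obtain h1 where h1: "norm h1 = 1" and h1n: "norm ((B + smat (- complex_of_real t) A) *v h1) = opnorm (B + smat (- complex_of_real t) A)"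
    using norming_exists by blast
  have "opnorm (B + smat (- complex_of_real t) A) \<ge> N" using bj N_def by (simp add: bj_orth_smat)
  then have "(opnorm (B + smat (- complex_of_real t) A))^2 \<ge> N^2" using Nn by (intro power_mono) simp_all
  with key[OF h1] h1n show False by simp
qed

lemma cinner_minus_right[simp]: "cinner p (- q) = - cinner p q"
  by (simp add: cinner_def sum_negf)
lemma cinner_minus_left[simp]: "cinner (- p) q = - cinner p q"
  by (simp add: cinner_def sum_negf)

lemma cmod_add_sq: "(cmod (u + v))^2 = (cmod u)^2 + 2 * Re (cnj u * v) + (cmod v)^2"
  unfolding cmod_power2 by (simp add: power2_eq_square algebra_simps)

lemma Re_cnj_mult_le: "Re (cnj u * v) \<le> cmod u * cmod v"
proof -
  have "Re (cnj u * v) \<le> cmod (cnj u * v)" by (rule complex_Re_le_cmod)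
  also have "\<dots> = cmod u * cmod v" by (simp add: norm_mult)
  finally show ?thesis .
qed

lemma cnj_mult_self: "cnj u * u = complex_of_real ((cmod u)^2)"
  by (metis complex_norm_square mult.commute)

lemma outer_norm_le: "norm (outer w y *v h) \<le> norm w * norm y * norm h"
proof -
  have "norm (outer w y *v h) = cmod (cinner y h) * norm w" by (simp add: outer_mv norm_smult)
  also have "\<dots> \<le> (norm y * norm h) * norm w" by (rule mult_right_mono[OF cs_ineq]) simp
  finally show ?thesis by (simp add: ac_simps)
qed

lemma cinner_self_real: "cinner y y = complex_of_real ((norm y)^2)" by (rule cinner_self)

lemma rank_one_not_bj:
  fixes A :: "complex^'n^'n" and w y :: "complex^'n"
  assumes w0: "w \<noteq> 0" and y0: "y \<noteq> 0" and r: "cinner w (A *v y) = complex_of_real r" and rpos: "r > 0"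
  shows "\<not> bj_orth (outer w y) A"
proof (rule not_bj_crit)
  let ?B = "outer w y"
  have ny: "norm y > 0" and nw: "norm w > 0" using w0 y0 by auto
  have le: "opnorm ?B \<le> norm w * norm y"
    by (rule opnorm_le) (rule outer_norm_le)
  define h0 where "h0 = (inverse (norm y)) *\<^sub>R y"
  have h0n: "norm h0 = 1" using ny by (simp add: h0_def)
  have "cinner y h0 = complex_of_real (inverse (norm y)) * cinner y y"
    by (simp add: h0_def ofreal_smult[symmetric] cinner_smult_right)
  also have "\<dots> = complex_of_real (norm y)" using ny
    by (simp add: cinner_self power2_eq_square)
  finally have "norm (?B *v h0) = norm y * norm w" by (simp add: outer_mv norm_smult)
  moreover have "norm (?B *v h0) \<le> opnorm ?B" using opnorm_bound[of ?B h0] h0n by simp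
  ultimately have eqn: "opnorm ?B = norm w * norm y" using le by (simp add: mult.commute)
  then show "opnorm ?B > 0" using ny nw by simp
  fix h :: "complex^'n"
  assume h1: "norm h = 1" and hn: "norm (?B *v h) = opnorm ?B"
  define c where "c = cinner y h"
  have "cmod c * norm w = norm w * norm y" using hn eqn by (simp add: outer_mv norm_smult c_def)
  then have cc: "cmod c = norm y" using nw by (simp add: mult.commute)
  define \<mu> where "\<mu> = c / complex_of_real ((norm y)^2)"
  have m1: "\<mu> * cnj c = 1"
  proof -
    have "\<mu> * cnj c = (cnj c * c) / complex_of_real ((norm y)^2)" by (simp add: \<mu>_def ac_simps)
    also have "cnj c * c = complex_of_real ((norm y)^2)" by (simp add: cnj_mult_self cc)
    finally show ?thesis using ny by simp
  qed
  have "cmod (complex_of_real ((norm y)^2)) = (norm y)^2" by (simp only: norm_of_real) simp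
  then have "cmod \<mu> = cmod c / (norm y)^2" by (simp only: \<mu>_def norm_divide)
  then have m2: "(cmod \<mu>)^2 * (norm y)^2 = 1"
    using ny cc by (simp add: power2_eq_square)
  have "(norm (h + (- \<mu>) *s y))^2 = (norm h)^2 + 2 * Re (cinner h ((- \<mu>) *s y)) + (norm ((- \<mu>) *s y))^2"
    by (rule norm_add_sq)
  also have "cinner h ((- \<mu>) *s y) = - (\<mu> * cnj c)"
  proof -
    have "cinner h y = cnj c" unfolding c_def by (rule cinner_cnj[symmetric])
    then show ?thesis by (simp add: cinner_smult_right)
  qed
  also have "(norm ((- \<mu>) *s y))^2 = (cmod \<mu>)^2 * (norm y)^2" by (simp add: norm_smult_sq)
  finally have "(norm (h + (- \<mu>) *s y))^2 = 0" using m1 m2 h1 by simp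
  then have h0: "h + (- \<mu>) *s y = 0" by simp
  have hy: "h = \<mu> *s y"
  proof -
    have "h = (h + (- \<mu>) *s y) + \<mu> *s y" by (simp add: vector_smult_lneg)
    then show ?thesis using h0 by simp
  qed
  have e1: "?B *v h = c *s w" by (simp add: outer_mv c_def)
  have e2: "A *v h = \<mu> *s (A *v y)" by (simp add: hy mv_smult)
  have "cinner (?B *v h) (A *v h) = cinner (c *s w) (\<mu> *s (A *v y))"
    by (simp only: e1 e2)
  also have "\<dots> = (\<mu> * cnj c) * cinner w (A *v y)"
    by (simp add: cinner_smult_left cinner_smult_right ac_simps)
  also have "\<dots> = complex_of_real r" using m1 r by simp
  finally show "inner (?B *v h) (A *v h) > 0" using rpos by (simp add: Re_cinner[symmetric])
qed

lemma mv_add_right: "A *v (u + v) = A *v u + A *v v" for A :: "complex^'n^'m"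
  by (simp add: matrix_vector_mult_def vec_eq_iff sum.distrib algebra_simps)

lemma cinner_swap: "cinner q p = cnj (cinner p q)" by (simp add: cinner_cnj)

lemma R2_not_bj:
  fixes A :: "complex^'n^'n" and x e e' :: "complex^'n" and a c :: real
  assumes nx: "norm x = 1" and ne: "norm e = 1" and xe: "cinner x e = 0"
    and ne': "norm e' = 1" and ze': "cinner (A *v x) e' = 0"
    and adjz: "adj A *v (A *v x) = complex_of_real (a^2) *s x"
    and nz: "norm (A *v x) = a" and apos: "a > 0"
    and cc: "cinner e' (A *v e) = complex_of_real c" and c0: "c \<ge> 0"
  shows "\<not> bj_orth (outer e' (x + e) + outer (A *v x) e) A"
proof (rule not_bj_crit)
  define z where "z = A *v x"
  define B where "B = outer e' (x + e) + outer z e"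
  have xx: "cinner x x = 1" using nx by (simp add: cinner_self)
  have ee: "cinner e e = 1" using ne by (simp add: cinner_self)
  have ex: "cinner e x = 0" using xe by (simp add: cinner_swap[of e x])
  have e'z: "cinner e' z = 0"
  proof -
    have "cinner e' z = cnj (cinner z e')" by (rule cinner_swap)
    then show ?thesis using ze' by (simp add: z_def)
  qed
  have zAe: "cinner z (A *v e) = 0"
    by (simp add: z_def cinner_adj adjz cinner_smult_left xe)
  have Bmv: "B *v h = (cinner x h + cinner e h) *s e' + cinner e h *s z" for h
    by (simp add: B_def mv_add outer_mv cinner_add_left)
  have Q: "(norm (B *v h))^2 = (cmod (cinner x h + cinner e h))^2 + a^2 * (cmod (cinner e h))^2" for h
  proof -
    have "(norm (B *v h))^2 = (norm ((cinner x h + cinner e h) *s e'))^2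
        + 2 * Re (cinner ((cinner x h + cinner e h) *s e') (cinner e h *s z)) + (norm (cinner e h *s z))^2"
      unfolding Bmv by (rule norm_add_sq)
    also have "cinner ((cinner x h + cinner e h) *s e') (cinner e h *s z) = 0"
      by (simp only: cinner_smult_left cinner_smult_right e'z mult_zero_right)
    finally have "(norm (B *v h))^2 = (norm ((cinner x h + cinner e h) *s e'))^2
        + 2 * Re 0 + (norm (cinner e h *s z))^2" .
    moreover have nzz: "norm z = a" using nz z_def by simp
    ultimately show ?thesis by (simp only: norm_smult_sq ne' nzz) (simp add: mult.commute)
  qed
  have coord: "cinner x (s *s x + t *s e) = s" "cinner e (s *s x + t *s e) = t"
      "(norm (s *s x + t *s e))^2 = (cmod s)^2 + (cmod t)^2" for s t
  proof -
    show "cinner x (s *s x + t *s e) = s" by (simp add: cinner_add_right cinner_smult_right xx xe)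
    show "cinner e (s *s x + t *s e) = t" by (simp add: cinner_add_right cinner_smult_right ee ex)
    have "(norm (s *s x + t *s e))^2 = (norm (s *s x))^2 + 2 * Re (cinner (s *s x) (t *s e)) + (norm (t *s e))^2"
      by (rule norm_add_sq)
    also have "cinner (s *s x) (t *s e) = 0" by (simp add: cinner_smult_left cinner_smult_right xe)
    finally show "(norm (s *s x + t *s e))^2 = (cmod s)^2 + (cmod t)^2"
      by (simp add: norm_smult_sq nx ne)
  qed
  define N where "N = opnorm B"
  have N0: "N \<ge> 0" using opnorm_nonneg N_def by simp
  have bound: "(cmod (s + t))^2 + a^2 * (cmod t)^2 \<le> N^2 * ((cmod s)^2 + (cmod t)^2)" for s t
  proof -
    have "norm (B *v (s *s x + t *s e)) \<le> N * norm (s *s x + t *s e)"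
      using opnorm_bound N_def by simp
    then have "(norm (B *v (s *s x + t *s e)))^2 \<le> (N * norm (s *s x + t *s e))^2"
      by (rule power_mono) simp
    then show ?thesis by (simp only: Q coord power_mult_distrib)
  qed
  have N2: "1 + a^2 \<le> N^2" using bound[of 0 1] by simp
  then show "opnorm (outer e' (x + e) + outer (A *v x) e) > 0"
    using N0 apos unfolding N_def B_def z_def
    by (metis add_pos_nonneg not_less power2_eq_square zero_le_power2 zero_less_one mult_zero_left le_less_trans order_le_less)
  fix h :: "complex^'n"
  assume h1: "norm h = 1" and hn: "norm ((outer e' (x + e) + outer (A *v x) e) *v h)
      = opnorm (outer e' (x + e) + outer (A *v x) e)"
  then have hN: "norm (B *v h) = N" by (simp add: B_def N_def z_def)
  define \<alpha> where "\<alpha> = cinner x h"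
  define \<beta> where "\<beta> = cinner e h"
  define p where "p = cmod \<alpha>"
  define q where "q = cmod \<beta>"
  have p0: "p \<ge> 0" and q0: "q \<ge> 0" by (simp_all add: p_def q_def)
  define r where "r = h - (\<alpha> *s x + \<beta> *s e)"
  have xr: "cinner x r = 0" by (simp add: r_def cinner_diff_right coord \<alpha>_def)
  have er: "cinner e r = 0" by (simp add: r_def cinner_diff_right coord \<beta>_def)
  have bessel: "1 = p^2 + q^2 + (norm r)^2"
  proof -
    have hr: "h = (\<alpha> *s x + \<beta> *s e) + r" by (simp add: r_def)
    have "(norm h)^2 = (norm (\<alpha> *s x + \<beta> *s e))^2 + 2 * Re (cinner (\<alpha> *s x + \<beta> *s e) r) + (norm r)^2"
      by (subst hr, rule norm_add_sq)
    also have "cinner (\<alpha> *s x + \<beta> *s e) r = 0"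
      by (simp add: cinner_add_left cinner_smult_left xr er)
    finally show ?thesis using h1 by (simp add: coord p_def q_def)
  qed
  have QN: "N^2 = (cmod (\<alpha> + \<beta>))^2 + a^2 * q^2"
    using Q[of h] hN by (simp add: \<alpha>_def \<beta>_def q_def)
  have ab: "(cmod (\<alpha> + \<beta>))^2 = p^2 + 2 * Re (cnj \<alpha> * \<beta>) + q^2"
    by (simp add: cmod_add_sq p_def q_def)
  have Rle: "Re (cnj \<alpha> * \<beta>) \<le> p * q" unfolding p_def q_def by (rule Re_cnj_mult_le)
  have bpq: "(p + q)^2 + a^2 * q^2 \<le> N^2 * (p^2 + q^2)"
    using bound[of "complex_of_real p" "complex_of_real q"] p0 q0
    by (simp del: of_real_add add: of_real_add[symmetric])
  have "(norm r)^2 \<ge> 0" by simp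
  then have pq1: "p^2 + q^2 \<le> 1" using bessel by linarith
  have "(0::real) < 1 + a^2" by (simp add: add_pos_nonneg)
  then have Npos: "N^2 > 0" using N2 by linarith
  have ps: "(p + q)^2 = p^2 + 2 * (p * q) + q^2" by (simp add: power2_sum)
  have "N^2 * 1 \<le> N^2 * (p^2 + q^2)" using QN ab Rle bpq ps by linarith
  then have "1 \<le> p^2 + q^2" using Npos by (simp only: mult_le_cancel_left_pos)
  then have s1: "p^2 + q^2 = 1" using pq1 by linarith
  have Req: "Re (cnj \<alpha> * \<beta>) = p * q" using QN ab Rle bpq ps s1 by simp
  have "(norm r)^2 = 0" using bessel s1 by linarith
  then have r0: "r = 0" by simp
  have hdec: "h = \<alpha> *s x + \<beta> *s e" using r0 by (simp add: r_def)
  have qpos: "q > 0"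
  proof (rule ccontr)
    assume "\<not> q > 0"
    then have q00: "q = 0" using q0 by simp
    then have "\<beta> = 0" by (simp add: q_def)
    then have "N^2 = p^2" using QN q00 by (simp add: p_def)
    then show False using s1 q00 N2 apos by simp
  qed
  have ppos: "p > 0"
  proof (rule ccontr)
    assume "\<not> p > 0"
    then have p00: "p = 0" using p0 by simp
    then have "\<alpha> = 0" by (simp add: p_def)
    then have NN: "N^2 = 1 + a^2" using QN s1 p00 by (simp add: q_def)
    define \<delta> where "\<delta> = 1 / (1 + a^2)"
    have dpos: "\<delta> > 0" by (simp add: \<delta>_def add_pos_nonneg)
    have "(cmod (complex_of_real \<delta> + 1))^2 + a^2 * (cmod (1::complex))^2
        \<le> N^2 * ((cmod (complex_of_real \<delta>))^2 + (cmod (1::complex))^2)"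
      by (rule bound)
    moreover have "cmod (complex_of_real \<delta> + 1) = \<delta> + 1"
      using dpos by (metis abs_of_pos add_pos_pos norm_of_real of_real_1 of_real_add zero_less_one)
    ultimately have "(\<delta> + 1)^2 + a^2 \<le> (1 + a^2) * (\<delta>^2 + 1)" using dpos NN by simp
    then have "2 * \<delta> \<le> (a^2 * \<delta>) * \<delta>" by (simp add: power2_eq_square algebra_simps)
    then have "2 \<le> a^2 * \<delta>" using dpos by simp
    moreover have "a^2 * \<delta> < 1" by (simp add: \<delta>_def add_pos_nonneg)
    ultimately show False by simp
  qed
  have Ah: "A *v h = \<alpha> *s z + \<beta> *s (A *v e)"
    by (simp add: hdec mv_add_right mv_smult z_def)
  have Bh: "B *v h = (\<alpha> + \<beta>) *s e' + \<beta> *s z"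
    by (simp add: Bmv \<alpha>_def \<beta>_def)
  have zz: "cinner z z = complex_of_real (a^2)" using nz by (simp add: cinner_self z_def)
  have "cinner (B *v h) (A *v h) = cnj (\<alpha> + \<beta>) * \<beta> * complex_of_real c + cnj \<beta> * \<alpha> * complex_of_real (a^2)"
    unfolding Bh Ah
    by (simp add: cinner_add_left cinner_add_right cinner_smult_left cinner_smult_right e'z cc zz zAe
        algebra_simps)
  then have "inner (B *v h) (A *v h) = Re (cnj (\<alpha> + \<beta>) * \<beta> * complex_of_real c) + Re (cnj \<beta> * \<alpha> * complex_of_real (a^2))"
    by (simp only: Re_cinner[symmetric] plus_complex.sel)
  also have "Re (cnj (\<alpha> + \<beta>) * \<beta> * complex_of_real c) = c * (Re (cnj \<alpha> * \<beta>) + q^2)"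
  proof -
    have "cnj (\<alpha> + \<beta>) * \<beta> = cnj \<alpha> * \<beta> + cnj \<beta> * \<beta>" by (simp add: algebra_simps)
    also have "cnj \<beta> * \<beta> = complex_of_real (q^2)" by (simp add: cnj_mult_self q_def)
    finally have "cnj (\<alpha> + \<beta>) * \<beta> = cnj \<alpha> * \<beta> + complex_of_real (q^2)" .
    then show ?thesis by (simp add: algebra_simps)
  qed
  also have "Re (cnj \<beta> * \<alpha> * complex_of_real (a^2)) = a^2 * Re (cnj \<alpha> * \<beta>)"
  proof -
    have "Re (cnj \<beta> * \<alpha>) = Re (cnj \<alpha> * \<beta>)" by (simp add: mult.commute)
    then show ?thesis by (simp add: mult.commute)
  qed
  finally have fin: "inner (B *v h) (A *v h) = c * (p * q + q^2) + a^2 * (p * q)" by (simp only: Req)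
  have "c * (p * q + q^2) \<ge> 0" using c0 p0 q0 by simp
  moreover have "a^2 * (p * q) > 0" using apos ppos qpos by simp
  ultimately have "inner (B *v h) (A *v h) > 0" using fin by linarith
  then show "inner ((outer e' (x + e) + outer (A *v x) e) *v h) (A *v h) > 0"
    by (simp add: B_def z_def)
qed

lemma exists_orth:
  fixes T :: "(complex^'n) set"
  assumes fT: "finite T" and cT: "card T < CARD('n)"
  shows "\<exists>e. e \<noteq> 0 \<and> (\<forall>g\<in>T. cinner g e = 0)"
proof -
  define S where "S = T \<union> (\<lambda>g. \<i> *s g) ` T"
  have fS: "finite S" using fT by (simp add: S_def)
  have "card S \<le> card T + card ((\<lambda>g. \<i> *s g) ` T)" unfolding S_def by (rule card_Un_le)
  also have "card ((\<lambda>g. \<i> *s g) ` T) \<le> card T" using fT by (rule card_image_le)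
  finally have "card S \<le> 2 * card T" by simp
  also have "2 * card T < DIM(complex^'n)" using cT by simp
  finally have cS: "card S < DIM(complex^'n)" .
  have "dim S \<le> card S" using fS by (intro dim_le_card) (auto intro: span_base)
  then have "dim S < DIM(complex^'n)" using cS by simp
  then obtain a :: "complex^'n" where a0: "a \<noteq> 0" and sp: "span S \<subseteq> {x. a \<bullet> x = 0}"
    using lowdim_subset_hyperplane by blast
  have "cinner g a = 0" if g: "g \<in> T" for g
  proof -
    have "g \<in> S" "\<i> *s g \<in> S" using g by (auto simp: S_def)
    then have i1: "a \<bullet> g = 0" and i2: "a \<bullet> (\<i> *s g) = 0" using sp span_base by blast+
    have "Re (cinner g a) = 0" using i1 by (simp add: Re_cinner inner_commute)
    moreover have "Re (cinner (\<i> *s g) a) = 0" using i2 by (simp add: Re_cinner inner_commute)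
    then have "Im (cinner g a) = 0" by (simp add: cinner_smult_left)
    ultimately show ?thesis by (simp add: complex_eq_iff)
  qed
  then show ?thesis using a0 by blast
qed

lemma frob_expand:
  fixes A :: "complex^'n^'n"
  shows "(\<Sum>i\<in>UNIV. \<Sum>l\<in>UNIV. A$i$l * cnj (\<Sum>q\<in>Q. c q * cnj (g q $ l) * f q $ i))
       = (\<Sum>q\<in>Q. cnj (c q) * cinner (f q) (A *v g q))"
proof -
  have "(\<Sum>i\<in>UNIV. \<Sum>l\<in>UNIV. A$i$l * cnj (\<Sum>q\<in>Q. c q * cnj (g q $ l) * f q $ i))
      = (\<Sum>i\<in>UNIV. \<Sum>l\<in>UNIV. \<Sum>q\<in>Q. cnj (c q) * (cnj (f q $ i) * (A$i$l * g q $ l)))"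
    by (simp add: cnj_sum sum_distrib_left ac_simps)
  also have "\<dots> = (\<Sum>i\<in>UNIV. \<Sum>q\<in>Q. \<Sum>l\<in>UNIV. cnj (c q) * (cnj (f q $ i) * (A$i$l * g q $ l)))"
    by (rule sum.cong[OF refl], rule sum.swap)
  also have "\<dots> = (\<Sum>q\<in>Q. \<Sum>i\<in>UNIV. \<Sum>l\<in>UNIV. cnj (c q) * (cnj (f q $ i) * (A$i$l * g q $ l)))"
    by (rule sum.swap)
  also have "\<dots> = (\<Sum>q\<in>Q. cnj (c q) * cinner (f q) (A *v g q))"
    by (simp add: cinner_def matrix_vector_mult_def sum_distrib_left)
  finally show ?thesis .
qed

lemma tail:
  fixes A :: "complex^'n^'n" and f g :: "nat \<Rightarrow> complex^'n" and d :: "nat \<Rightarrow> complex"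
  assumes rep: "\<And>h. A *v h = (\<Sum>q\<le>k. (d q * cinner (g q) h) *s f q)"
    and d0: "d 0 = 1" and g0: "g 0 = x" and f0: "f 0 = A *v x"
    and nx: "norm x = 1"
    and orth: "\<And>q. q \<in> {1..k} \<Longrightarrow> cinner (f q) (A *v g q) = 0"
  shows "A = outer (A *v x) x"
proof -
  define z where "z = A *v x"
  have ent: "A$i$l = (\<Sum>q\<le>k. d q * cnj (g q $ l) * f q $ i)" for i l
  proof -
    have "A$i$l = (A *v axis l 1) $ i" by (simp add: matrix_vector_mult_def axis_def if_distrib cong: if_cong)
    also have "\<dots> = (\<Sum>q\<le>k. d q * cnj (g q $ l) * f q $ i)"
      by (simp add: rep sum_component cinner_def axis_def if_distrib cong: if_cong)
    finally show ?thesis .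
  qed
  have zz: "cinner z z = complex_of_real ((norm z)^2)" by (rule cinner_self)
  have xx: "cinner x x = 1" using nx by (simp add: cinner_self)
  have F: "(\<Sum>i\<in>UNIV. \<Sum>l\<in>UNIV. A$i$l * cnj (A$i$l)) = cinner z z"
  proof -
    have "(\<Sum>i\<in>UNIV. \<Sum>l\<in>UNIV. A$i$l * cnj (A$i$l)) = (\<Sum>q\<le>k. cnj (d q) * cinner (f q) (A *v g q))"
      by (simp only: ent[symmetric] frob_expand[symmetric])
    also have "{..k} = insert 0 {1..k}" by auto
    also have "(\<Sum>q\<in>insert 0 {1..k}. cnj (d q) * cinner (f q) (A *v g q)) = cnj (d 0) * cinner (f 0) (A *v g 0)"
      using orth by (simp add: sum.insert)
    finally show ?thesis by (simp add: d0 g0 f0 z_def)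
  qed
  define D where "D i l = A$i$l - z$i * cnj (x$l)" for i l
  have T2: "(\<Sum>i\<in>UNIV. \<Sum>l\<in>UNIV. A$i$l * (cnj (z$i) * x$l)) = cinner z z"
  proof -
    have "(\<Sum>i\<in>UNIV. \<Sum>l\<in>UNIV. A$i$l * (cnj (z$i) * x$l)) = cinner z (A *v x)"
      by (simp add: cinner_def matrix_vector_mult_def sum_distrib_left ac_simps)
    also have "A *v x = z" by (simp add: z_def)
    finally show ?thesis .
  qed
  have T3: "(\<Sum>i\<in>UNIV. \<Sum>l\<in>UNIV. z$i * cnj (x$l) * cnj (A$i$l)) = cinner z z"
  proof -
    have "(\<Sum>i\<in>UNIV. \<Sum>l\<in>UNIV. z$i * cnj (x$l) * cnj (A$i$l))
        = cnj (\<Sum>i\<in>UNIV. \<Sum>l\<in>UNIV. A$i$l * (cnj (z$i) * x$l))"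
      unfolding cnj_sum
      by (intro sum.cong refl) (simp add: ac_simps)
    also have "\<dots> = cnj (cinner z z)" by (simp only: T2)
    also have "\<dots> = cinner z z" by (simp add: zz)
    finally show ?thesis .
  qed
  have T4: "(\<Sum>i\<in>UNIV. \<Sum>l\<in>UNIV. z$i * cnj (x$l) * (cnj (z$i) * x$l)) = cinner z z"
  proof -
    have "(\<Sum>i\<in>UNIV. \<Sum>l\<in>UNIV. z$i * cnj (x$l) * (cnj (z$i) * x$l))
        = (\<Sum>i\<in>UNIV. cnj (z$i) * z$i) * (\<Sum>l\<in>UNIV. cnj (x$l) * x$l)"
      by (simp add: sum_distrib_left sum_distrib_right ac_simps)
    also have "\<dots> = cinner z z * cinner x x" by (simp add: cinner_def)
    finally show ?thesis by (simp add: xx)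
  qed
  have expand: "D i l * cnj (D i l) = A$i$l * cnj (A$i$l) - A$i$l * (cnj (z$i) * x$l)
      - z$i * cnj (x$l) * cnj (A$i$l) + z$i * cnj (x$l) * (cnj (z$i) * x$l)" for i l
    by (simp add: D_def algebra_simps)
  have S0: "(\<Sum>i\<in>UNIV. \<Sum>l\<in>UNIV. D i l * cnj (D i l)) = 0"
    by (simp only: expand sum.distrib sum_subtractf F T2 T3 T4) simp
  have "(\<Sum>i\<in>UNIV. \<Sum>l\<in>UNIV. (cmod (D i l))^2) = Re (\<Sum>i\<in>UNIV. \<Sum>l\<in>UNIV. D i l * cnj (D i l))"
    by (simp add: Re_sum complex_norm_square[symmetric] del: of_real_power)
  then have S1: "(\<Sum>i\<in>UNIV. \<Sum>l\<in>UNIV. (cmod (D i l))^2) = 0" using S0 by simp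
  have "D i l = 0" for i l
  proof -
    have "(\<Sum>l\<in>UNIV. (cmod (D i l))^2) = 0"
      using S1 by (simp add: sum_nonneg_eq_0_iff sum_nonneg)
    then show ?thesis by (simp add: sum_nonneg_eq_0_iff)
  qed
  then show ?thesis by (simp add: D_def outer_def vec_eq_iff z_def)
qed

lemma rank_outer:
  fixes z x :: "complex^'n"
  assumes nz: "outer z x \<noteq> 0"
  shows "rank (outer z x) = 1"
proof -
  define c :: "complex^'n" where "c = (\<chi> l. cnj (x$l))"
  have rowi: "row i (outer z x) = z$i *s c" for i
    by (simp add: row_def outer_def c_def vec_eq_iff)
  have sub: "rows (outer z x) \<subseteq> vec.span {c}"
  proof
    fix r assume "r \<in> rows (outer z x)"
    then obtain i where "r = row i (outer z x)" by (auto simp: rows_def)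
    then have "r = z$i *s c" by (simp add: rowi)
    moreover have "c \<in> vec.span {c}" by (rule vec.span_base) simp
    ultimately show "r \<in> vec.span {c}" by (simp add: vec.span_scale)
  qed
  have le: "vec.dim (rows (outer z x)) \<le> 1"
    using vec.dim_le_card[OF sub] by simp
  have "\<not> rows (outer z x) \<subseteq> {0}"
  proof
    assume "rows (outer z x) \<subseteq> {0}"
    then have "\<And>i. row i (outer z x) = 0" by (auto simp: rows_def)
    then have "outer z x = 0" by (simp add: vec_eq_iff row_def)
    with nz show False by simp
  qed
  then have "vec.dim (rows (outer z x)) \<noteq> 0" by simp
  with le have "vec.dim (rows (outer z x)) = 1" by linarith
  then show ?thesis by (simp add: row_rank_def_gen)
qed

lemma norming_eig:
  fixes A :: "complex^'n^'n"
  assumes nx: "norm x = 1" and xn: "norm (A *v x) = opnorm A"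
  shows "adj A *v (A *v x) = complex_of_real ((opnorm A)^2) *s x"
proof -
  define a where "a = opnorm A"
  define y where "y = adj A *v (A *v x)"
  have a0: "a \<ge> 0" using opnorm_nonneg a_def by simp
  have "(norm y)^2 = Re (cinner y y)" by (simp add: cinner_self)
  also have "cinner y y = cinner (A *v x) (A *v y)" by (simp add: y_def cinner_adj)
  also have "Re (cinner (A *v x) (A *v y)) = inner (A *v x) (A *v y)" by (rule Re_cinner)
  also have "\<dots> \<le> norm (A *v x) * norm (A *v y)" by (rule norm_cauchy_schwarz)
  also have "\<dots> \<le> a * (a * norm y)"
    using opnorm_bound[of A y] xn a0 a_def by (intro mult_mono) simp_all
  finally have "(norm y)^2 \<le> a^2 * norm y" by (simp add: power2_eq_square ac_simps)
  then have ny: "norm y \<le> a^2"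
    by (cases "norm y = 0") (use a0 in \<open>simp_all add: power2_eq_square\<close>)
  have "Re (cinner y x) = Re (cinner (A *v x) (A *v x))" by (simp add: y_def cinner_adj)
  also have "\<dots> = a^2" by (simp add: cinner_self xn a_def)
  finally have yx: "inner y x = a^2" by (simp add: Re_cinner)
  have "(norm (y - a^2 *\<^sub>R x))^2 = (norm y)^2 - 2 * a^2 * inner y x + (a^2)^2 * (norm x)^2"
    by (rule norm_diff_scaleR_sq)
  also have "\<dots> = (norm y)^2 - (a^2)^2" using yx nx by (simp add: power2_eq_square)
  also have "\<dots> \<le> 0"
  proof -
    have "(norm y)^2 \<le> (a^2)^2" using ny by (intro power_mono) simp_all
    then show ?thesis by simp
  qed
  finally have "y - a^2 *\<^sub>R x = 0" by simp
  then have "y = a^2 *\<^sub>R x" by simp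
  also have "\<dots> = complex_of_real (a^2) *s x" by (rule ofreal_smult[symmetric])
  finally show ?thesis by (simp only: y_def a_def)
qed

lemma dual_exists:
  fixes g :: "nat \<Rightarrow> complex^'n"
  assumes span: "\<And>e. (\<forall>q\<le>k. cinner (g q) e = 0) \<Longrightarrow> e = 0"
    and kn: "k < CARD('n)" and qk: "q \<le> k"
  shows "\<exists>y. (\<forall>j\<le>k. j \<noteq> q \<longrightarrow> cinner (g j) y = 0) \<and> cinner (g q) y = 1"
proof -
  have fin: "finite (g ` ({..k} - {q}))" by simp
  have "card (g ` ({..k} - {q})) \<le> card ({..k} - {q})" by (rule card_image_le) simp
  also have "card ({..k} - {q}) = k" using qk by simp
  finally have "card (g ` ({..k} - {q})) < CARD('n)" using kn by simp
  then obtain y0 where y0: "y0 \<noteq> 0" and o: "\<forall>t\<in>g ` ({..k} - {q}). cinner t y0 = 0"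
    using exists_orth[OF fin] by blast
  have oj: "cinner (g j) y0 = 0" if "j \<le> k" "j \<noteq> q" for j using o that by auto
  have nq: "cinner (g q) y0 \<noteq> 0"
  proof
    assume "cinner (g q) y0 = 0"
    then have "\<forall>j\<le>k. cinner (g j) y0 = 0" using oj by (metis)
    then have "y0 = 0" by (rule span)
    with y0 show False by simp
  qed
  define y where "y = inverse (cinner (g q) y0) *s y0"
  have "\<forall>j\<le>k. j \<noteq> q \<longrightarrow> cinner (g j) y = 0" by (simp add: y_def cinner_smult_right oj)
  moreover have "cinner (g q) y = 1" using nq by (simp add: y_def cinner_smult_right)
  ultimately show ?thesis by blast
qed

lemma expand_dual:
  fixes g gh :: "nat \<Rightarrow> complex^'n"
  assumes span: "\<And>e. (\<forall>q\<le>k. cinner (g q) e = 0) \<Longrightarrow> e = 0"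
    and gh: "\<And>p q. p \<le> k \<Longrightarrow> q \<le> k \<Longrightarrow> cinner (g p) (gh q) = (if p = q then 1 else 0)"
  shows "h = (\<Sum>q\<le>k. cinner (g q) h *s gh q)"
proof -
  define r where "r = h - (\<Sum>q\<le>k. cinner (g q) h *s gh q)"
  have "cinner (g p) r = 0" if pk: "p \<le> k" for p
  proof -
    have "cinner (g p) (\<Sum>q\<le>k. cinner (g q) h *s gh q) = (\<Sum>q\<le>k. cinner (g q) h * cinner (g p) (gh q))"
      by (simp add: cinner_sum_right cinner_smult_right)
    also have "\<dots> = (\<Sum>q\<le>k. if q = p then cinner (g q) h else 0)"
      by (rule sum.cong) (auto simp: gh pk)
    also have "\<dots> = cinner (g p) h" using pk by (simp add: sum.delta)
    finally show ?thesis by (simp add: r_def cinner_diff_right)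
  qed
  then have "r = 0" using span by blast
  then show ?thesis by (simp add: r_def)
qed

lemma proj_orth:
  fixes f p :: "complex^'n"
  shows "cinner f (p - (cinner f p / complex_of_real ((norm f)^2)) *s f) = 0"
proof (cases "f = 0")
  case True then show ?thesis by simp
next
  case False
  then have "complex_of_real ((norm f)^2) \<noteq> 0" by simp
  then show ?thesis by (simp add: cinner_diff_right cinner_smult_right cinner_self)
qed

lemma R1_case:
  fixes A :: "complex^'n^'n" and f g :: "nat \<Rightarrow> complex^'n"
  assumes span: "\<And>e. (\<forall>q\<le>k. cinner (g q) e = 0) \<Longrightarrow> e = 0"
    and kn: "k < CARD('n)"
    and HL: "\<And>B. (\<forall>q\<le>k. cinner (f q) (B *v g q) = 0) \<Longrightarrow> bj_orth B A"
    and g0: "g 0 = x" and f0: "f 0 = A *v x" and nx: "norm x = 1"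
    and adjz: "adj A *v (A *v x) = complex_of_real (a^2) *s x"
    and nz: "norm (A *v x) = a" and apos: "a > 0"
    and AinL: "\<And>q. q \<in> {1..k} \<Longrightarrow> cinner (f q) (A *v g q) = 0"
  shows "A = outer (A *v x) x"
proof -
  have "\<forall>q. \<exists>y. q \<le> k \<longrightarrow> (\<forall>j\<le>k. j \<noteq> q \<longrightarrow> cinner (g j) y = 0) \<and> cinner (g q) y = 1"
    using dual_exists[OF span kn] by blast
  then obtain gh where ghp: "\<And>q. q \<le> k \<Longrightarrow> (\<forall>j\<le>k. j \<noteq> q \<longrightarrow> cinner (g j) (gh q) = 0) \<and> cinner (g q) (gh q) = 1"
    by metis
  have gh: "cinner (g p) (gh q) = (if p = q then 1 else 0)" if "p \<le> k" "q \<le> k" for p q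
    using ghp that by auto
  define d where "d q = cinner (f q) (A *v gh q) / complex_of_real ((norm (f q))^2)" for q
  define w where "w q = A *v gh q - d q *s f q" for q
  have fw: "cinner (f q) (w q) = 0" for q unfolding w_def d_def by (rule proj_orth)
  show ?thesis
  proof (cases "\<exists>q\<le>k. w q \<noteq> 0")
    case True
    then obtain q where qk: "q \<le> k" and wq: "w q \<noteq> 0" by blast
    define B where "B = outer (w q) (gh q)"
    have "cinner (f j) (B *v g j) = 0" if jk: "j \<le> k" for j
    proof (cases "j = q")
      case True
      then show ?thesis by (simp add: B_def outer_mv cinner_smult_right fw)
    next
      case False
      have "cinner (gh q) (g j) = cnj (cinner (g j) (gh q))" by (rule cinner_swap)
      also have "cinner (g j) (gh q) = 0" using gh[OF jk qk] False by simp
      finally show ?thesis by (simp add: B_def outer_mv cinner_smult_right)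
    qed
    then have "bj_orth B A" by (intro HL) blast
    moreover have "\<not> bj_orth B A" unfolding B_def
    proof (rule rank_one_not_bj[OF wq])
      show "gh q \<noteq> 0" using gh[OF qk qk] by auto
      have "A *v gh q = w q + d q *s f q" by (simp add: w_def)
      then have "cinner (w q) (A *v gh q) = cinner (w q) (w q) + d q * cinner (w q) (f q)"
        by (simp add: cinner_add_right cinner_smult_right)
      also have "cinner (w q) (f q) = cnj (cinner (f q) (w q))" by (rule cinner_swap)
      finally show "cinner (w q) (A *v gh q) = complex_of_real ((norm (w q))^2)"
        by (simp add: fw cinner_self)
      show "(norm (w q))^2 > 0" using wq by simp
    qed
    ultimately show ?thesis by simp
  next
    case False
    then have Agh: "A *v gh q = d q *s f q" if "q \<le> k" for q using that by (auto simp: w_def)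
    have rep: "A *v h = (\<Sum>q\<le>k. (d q * cinner (g q) h) *s f q)" for h
    proof -
      have "A *v h = A *v (\<Sum>q\<le>k. cinner (g q) h *s gh q)"
        using expand_dual[OF span gh, where h=h] by simp
      also have "\<dots> = (\<Sum>q\<le>k. cinner (g q) h *s (A *v gh q))" by (simp add: mv_sum mv_smult)
      also have "\<dots> = (\<Sum>q\<le>k. (d q * cinner (g q) h) *s f q)"
        by (rule sum.cong) (simp_all add: Agh vector_smult_assoc mult.commute)
      finally show ?thesis .
    qed
    have d0: "d 0 = 1"
    proof -
      have "cinner (A *v x) (A *v gh 0) = d 0 * cinner (A *v x) (A *v x)"
        using Agh[of 0] f0 by (simp add: cinner_smult_right)
      also have "cinner (A *v x) (A *v x) = complex_of_real (a^2)" by (simp add: cinner_self nz)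
      finally have e1: "cinner (A *v x) (A *v gh 0) = d 0 * complex_of_real (a^2)" .
      have "cinner (A *v x) (A *v gh 0) = cinner (adj A *v (A *v x)) (gh 0)" by (rule cinner_adj)
      also have "\<dots> = complex_of_real (a^2) * cinner x (gh 0)" by (simp add: adjz cinner_smult_left)
      also have "cinner x (gh 0) = 1" using gh[of 0 0] g0 by simp
      finally have "d 0 * complex_of_real (a^2) = complex_of_real (a^2)" using e1 by simp
      then show ?thesis using apos by simp
    qed
    show ?thesis by (rule tail[OF rep d0 g0 f0 nx AinL])
  qed
qed

lemma R1'_case:
  fixes A :: "complex^'n^'n" and f g :: "nat \<Rightarrow> complex^'n"
  assumes span: "\<And>e. (\<forall>q\<le>k. cinner (f q) e = 0) \<Longrightarrow> e = 0"
    and kn: "k < CARD('n)"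
    and HL: "\<And>B. (\<forall>q\<le>k. cinner (f q) (B *v g q) = 0) \<Longrightarrow> bj_orth B A"
    and g0: "g 0 = x" and f0: "f 0 = A *v x" and nx: "norm x = 1"
    and AinL: "\<And>q. q \<in> {1..k} \<Longrightarrow> cinner (f q) (A *v g q) = 0"
  shows "A = outer (A *v x) x"
proof -
  have "\<forall>q. \<exists>y. q \<le> k \<longrightarrow> (\<forall>j\<le>k. j \<noteq> q \<longrightarrow> cinner (f j) y = 0) \<and> cinner (f q) y = 1"
    using dual_exists[OF span kn] by blast
  then obtain fh where fhp: "\<And>q. q \<le> k \<Longrightarrow> (\<forall>j\<le>k. j \<noteq> q \<longrightarrow> cinner (f j) (fh q) = 0) \<and> cinner (f q) (fh q) = 1"
    by metis
  have fh: "cinner (f p) (fh q) = (if p = q then 1 else 0)" if "p \<le> k" "q \<le> k" for p q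
    using fhp that by auto
  define m where "m q = cinner (g q) (adj A *v fh q) / complex_of_real ((norm (g q))^2)" for q
  define y where "y q = adj A *v fh q - m q *s g q" for q
  have gy: "cinner (g q) (y q) = 0" for q unfolding y_def m_def by (rule proj_orth)
  show ?thesis
  proof (cases "\<exists>q\<le>k. y q \<noteq> 0")
    case True
    then obtain q where qk: "q \<le> k" and yq: "y q \<noteq> 0" by blast
    define B where "B = outer (fh q) (y q)"
    have "cinner (f j) (B *v g j) = 0" if jk: "j \<le> k" for j
    proof (cases "j = q")
      case True
      have "cinner (y q) (g q) = cnj (cinner (g q) (y q))" by (rule cinner_swap)
      then have "cinner (y q) (g q) = 0" by (simp add: gy)
      then show ?thesis using True by (simp add: B_def outer_mv cinner_smult_right)
    next
      case False
      have "cinner (f j) (fh q) = 0" using fh[OF jk qk] False by simp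
      then show ?thesis by (simp add: B_def outer_mv cinner_smult_right)
    qed
    then have "bj_orth B A" by (intro HL) blast
    moreover have "\<not> bj_orth B A" unfolding B_def
    proof (rule rank_one_not_bj[OF _ yq])
      show "fh q \<noteq> 0" using fh[OF qk qk] by auto
      have "cinner (fh q) (A *v y q) = cinner (adj A *v fh q) (y q)" by (rule cinner_adj)
      also have "adj A *v fh q = y q + m q *s g q" by (simp add: y_def)
      also have "cinner (y q + m q *s g q) (y q) = cinner (y q) (y q) + cnj (m q) * cinner (g q) (y q)"
        by (simp add: cinner_add_left cinner_smult_left)
      finally show "cinner (fh q) (A *v y q) = complex_of_real ((norm (y q))^2)"
        by (simp add: gy cinner_self)
      show "(norm (y q))^2 > 0" using yq by simp
    qed
    ultimately show ?thesis by simp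
  next
    case False
    then have Afh: "adj A *v fh q = m q *s g q" if "q \<le> k" for q using that by (auto simp: y_def)
    have rep: "A *v h = (\<Sum>q\<le>k. (cnj (m q) * cinner (g q) h) *s f q)" for h
    proof (rule cinner_eq_vec)
      fix p
      have "cinner p (A *v h) = cinner (adj A *v p) h" by (rule cinner_adj)
      also have "adj A *v p = adj A *v (\<Sum>q\<le>k. cinner (f q) p *s fh q)"
        using expand_dual[OF span fh, where h=p] by simp
      also have "\<dots> = (\<Sum>q\<le>k. cinner (f q) p *s (m q *s g q))"
        by (simp add: mv_sum mv_smult Afh)
      also have "cinner \<dots> h = (\<Sum>q\<le>k. cnj (cinner (f q) p) * cnj (m q) * cinner (g q) h)"
        by (simp add: cinner_sum_left cinner_smult_left)
      also have "\<dots> = cinner p (\<Sum>q\<le>k. (cnj (m q) * cinner (g q) h) *s f q)"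
      proof -
        have "cnj (cinner (f q) p) = cinner p (f q)" for q by (rule cinner_cnj)
        then show ?thesis by (simp add: cinner_sum_right cinner_smult_right ac_simps)
      qed
      finally show "cinner p (A *v h) = cinner p (\<Sum>q\<le>k. (cnj (m q) * cinner (g q) h) *s f q)" .
    qed
    have d0: "cnj (m 0) = 1"
    proof -
      have "cinner (fh 0) (A *v x) = cinner (adj A *v fh 0) x" by (rule cinner_adj)
      also have "\<dots> = cnj (m 0)" using Afh[of 0] g0 nx by (simp add: cinner_smult_left cinner_self)
      finally have e1: "cinner (fh 0) (A *v x) = cnj (m 0)" .
      have "cinner (fh 0) (A *v x) = cnj (cinner (A *v x) (fh 0))" by (rule cinner_swap)
      also have "cinner (A *v x) (fh 0) = 1" using fh[of 0 0] f0 by simp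
      finally show ?thesis using e1 by simp
    qed
    show ?thesis by (rule tail[where d = "\<lambda>q. cnj (m q)", OF rep d0 g0 f0 nx AinL])
  qed
qed

lemma sesq_cinner: "sesq v X u = cinner v (X *v u)"
  by (simp add: sesq_def cinner_def)

theorem lemma3p2:
  fixes v u :: "nat \<Rightarrow> complex^'n" and k :: nat and A :: "complex^'n^'n"
  assumes "CARD('n) \<ge> 2"
    and "k \<le> CARD('n) - 1"
    and "\<And>i. i < k \<Longrightarrow> norm (v i) = 1"
    and "\<And>i. i < k \<Longrightarrow> norm (u i) = 1"
    and "A \<noteq> 0"
    and "left_symmetric_in {X. \<forall>i<k. sesq (v i) X (u i) = 0} A"
  shows "rank A = 1 \<or> rank A = CARD('n)"
proof -
  have kn: "k < CARD('n)" using assms(2) assms(1) by linarith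
  have A0: "A \<noteq> 0" by (rule assms(5))
  have AS: "\<forall>i<k. sesq (v i) A (u i) = 0" and sym: "\<And>B. B \<in> {X. \<forall>i<k. sesq (v i) X (u i) = 0} \<Longrightarrow> bj_orth A B \<Longrightarrow> bj_orth B A"
    using assms(6) by (auto simp: left_symmetric_in_def)
  obtain x where nx: "norm x = 1" and xn: "norm (A *v x) = opnorm A"
    using norming_exists by blast
  define a where "a = opnorm A"
  have apos: "a > 0" using opnorm_pos[OF A0] a_def by simp
  have nz: "norm (A *v x) = a" using xn a_def by simp
  have adjz: "adj A *v (A *v x) = complex_of_real (a^2) *s x"
    using norming_eig[OF nx xn] a_def by simp
  define g where "g q = (if q = 0 then x else u (q - 1))" for q
  define f where "f q = (if q = 0 then A *v x else v (q - 1))" for q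
  have g0: "g 0 = x" and f0: "f 0 = A *v x" by (simp_all add: g_def f_def)
  have HL: "bj_orth B A" if hB: "\<forall>q\<le>k. cinner (f q) (B *v g q) = 0" for B
  proof (rule sym)
    show "B \<in> {X. \<forall>i<k. sesq (v i) X (u i) = 0}"
    proof (simp, intro allI impI)
      fix i assume "i < k"
      then have "Suc i \<le> k" by simp
      then have "cinner (f (Suc i)) (B *v g (Suc i)) = 0" using hB by blast
      then show "sesq (v i) B (u i) = 0" by (simp add: sesq_cinner f_def g_def)
    qed
    show "bj_orth A B"
      by (rule bj_from_norming[OF nx xn]) (use hB[rule_format, of 0] in \<open>simp add: f_def g_def\<close>)
  qed
  have AinL: "cinner (f q) (A *v g q) = 0" if "q \<in> {1..k}" for q
  proof -
    have "q - 1 < k" using that by auto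
    then show ?thesis using AS that by (simp add: sesq_cinner f_def g_def)
  qed
  have main: "A = outer (A *v x) x"
  proof (cases "\<exists>e. e \<noteq> 0 \<and> (\<forall>q\<le>k. cinner (g q) e = 0)")
    case False
    then have span: "\<And>e. (\<forall>q\<le>k. cinner (g q) e = 0) \<Longrightarrow> e = 0" by blast
    show ?thesis by (rule R1_case[where k=k and g=g and f=f and A=A and x=x and a=a, OF span kn HL g0 f0 nx adjz nz apos AinL]) blast+
  next
    case Eg: True
    show ?thesis
    proof (cases "\<exists>e. e \<noteq> 0 \<and> (\<forall>q\<le>k. cinner (f q) e = 0)")
      case False
      then have span: "\<And>e. (\<forall>q\<le>k. cinner (f q) e = 0) \<Longrightarrow> e = 0" by blast
      show ?thesis by (rule R1'_case[where k=k and g=g and f=f and A=A and x=x, OF span kn HL g0 f0 nx AinL]) blast+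
    next
      case Ef: True
      obtain e0 where e00: "e0 \<noteq> 0" and e0o: "\<forall>q\<le>k. cinner (g q) e0 = 0" using Eg by blast
      obtain e1 where e10: "e1 \<noteq> 0" and e1o: "\<forall>q\<le>k. cinner (f q) e1 = 0" using Ef by blast
      define e where "e = complex_of_real (inverse (norm e0)) *s e0"
      have ne: "norm e = 1" using e00 by (simp only: e_def ofreal_smult) simp
      have eo: "cinner (g q) e = 0" if "q \<le> k" for q using e0o that by (simp add: e_def cinner_smult_right)
      define e2 where "e2 = complex_of_real (inverse (norm e1)) *s e1"
      have ne2: "norm e2 = 1" using e10 by (simp only: e2_def ofreal_smult) simp
      have e2o: "cinner (f q) e2 = 0" if "q \<le> k" for q using e1o that by (simp add: e2_def cinner_smult_right)
      define c0 where "c0 = cinner e2 (A *v e)"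
      define \<omega> where "\<omega> = (if c0 = 0 then 1 else c0 / complex_of_real (cmod c0))"
      have om: "cmod \<omega> = 1" by (simp add: \<omega>_def norm_divide)
      define e' where "e' = \<omega> *s e2"
      have ne': "norm e' = 1" by (simp add: e'_def norm_smult om ne2)
      have e'o: "cinner (f q) e' = 0" if "q \<le> k" for q using e2o that by (simp add: e'_def cinner_smult_right)
      have cc: "cinner e' (A *v e) = complex_of_real (cmod c0)"
      proof (cases "c0 = 0")
        case True then show ?thesis by (simp add: e'_def \<omega>_def cinner_smult_left c0_def)
      next
        case False
        have "cinner e' (A *v e) = cnj \<omega> * c0" by (simp add: e'_def cinner_smult_left c0_def)
        also have "\<dots> = (cnj c0 * c0) / complex_of_real (cmod c0)" using False by (simp add: \<omega>_def)
        also have "cnj c0 * c0 = complex_of_real ((cmod c0)^2)" by (rule cnj_mult_self)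
        finally show ?thesis using False by (simp add: power2_eq_square)
      qed
      define B where "B = outer e' (x + e) + outer (A *v x) e"
      have "cinner (f q) (B *v g q) = 0" if qk: "q \<le> k" for q
      proof -
        have "cinner e (g q) = cnj (cinner (g q) e)" by (rule cinner_swap)
        then have "cinner e (g q) = 0" using eo[OF qk] by simp
        then show ?thesis using e'o[OF qk]
          by (simp add: B_def mv_add outer_mv cinner_add_right cinner_smult_right)
      qed
      then have "bj_orth B A" by (intro HL) blast
      moreover have "\<not> bj_orth B A" unfolding B_def
      proof (rule R2_not_bj[OF nx ne _ ne' _ adjz nz apos cc])
        show "cinner x e = 0" using eo[of 0] g0 by simp
        show "cinner (A *v x) e' = 0" using e'o[of 0] f0 by simp
        show "cmod c0 \<ge> 0" by simp
      qed
      ultimately show ?thesis by simp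
    qed
  qed
  have "rank A = 1" using main rank_outer A0 by metis
  then show ?thesis by simp
qed

end
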